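(* Let $(M,d)$ be a complete pointed metric space with at least three distinct points. Then $G\cap(-G)=\Phi\,\mathrm{Lip}_0(M)$.
   Context: $\mathrm{Lip}_0(M)$: Lipschitz $f:M\to\mathbb{R}$ with $f(0)=0$ ($0$ the base point). $\widetilde{M}=\{(x,y)\in M\times M:x\ne y\}$, $\beta\widetilde{M}$ its Stone–Čech compactification. $\Phi:\mathrm{Lip}_0(M)\to C(\beta\widetilde{M})$ maps $f$ to the continuous extension of $(x,y)\mapsto(f(x)-f(y))/d(x,y)$. $G$ is the set of $g\in C(\beta\widetilde{M})$ such that $d(x,y)g(x,y)\le d(x,u)g(x,u)+d(u,y)g(u,y)$ for all distinct $x,u,y\in M$. *)

theory Defs
  imports "HOL-Analysis.Analysis"
begin

(* M is the whole type 'a (a complete metric space); the base point is z. *)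

definition Lip0 :: "'a::metric_space \<Rightarrow> ('a \<Rightarrow> real) set" where
  "Lip0 z = {f. f z = 0 \<and> (\<exists>L. L-lipschitz_on UNIV f)}"

definition Mtilde :: "('a \<times> 'a) set" where
  "Mtilde = {(x, y). x \<noteq> y}"

(* (K, e) is a Stone-Cech compactification of the topological space X:
   K compact Hausdorff, e an embedding with dense image, and every bounded
   continuous real function on X extends continuously to K
   (the standard characterisation of beta X). *)
definition stone_cech :: "'b topology \<Rightarrow> 'k topology \<Rightarrow> ('b \<Rightarrow> 'k) \<Rightarrow> bool" where
  "stone_cech X K e \<longleftrightarrow>
     compact_space K \<and> Hausdorff_space K \<and> embedding_map X K e \<and>
     K closure_of (e ` topspace X) = topspace K \<and>
     (\<forall>h. continuous_map X euclideanreal h \<and> bounded (h ` topspace X) \<longrightarrow>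
        (\<exists>g. continuous_map K euclideanreal g \<and> (\<forall>x\<in>topspace X. g (e x) = h x)))"

definition CK :: "'k topology \<Rightarrow> ('k \<Rightarrow> real) set" where
  "CK K = {g. continuous_map K euclideanreal g \<and> (\<forall>p. p \<notin> topspace K \<longrightarrow> g p = 0)}"

definition Phi :: "'k topology \<Rightarrow> ('a \<times> 'a \<Rightarrow> 'k) \<Rightarrow> ('a::metric_space \<Rightarrow> real) \<Rightarrow> ('k \<Rightarrow> real)" where
  "Phi K e f = (THE h. h \<in> CK K \<and>
      (\<forall>x y. x \<noteq> y \<longrightarrow> h (e (x, y)) = (f x - f y) / dist x y))"

definition GG :: "'k topology \<Rightarrow> ('a::metric_space \<times> 'a \<Rightarrow> 'k) \<Rightarrow> ('k \<Rightarrow> real) set" where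
  "GG K e = {g \<in> CK K. \<forall>x u y. x \<noteq> u \<and> u \<noteq> y \<and> x \<noteq> y \<longrightarrow>
      dist x y * g (e (x, y)) \<le> dist x u * g (e (x, u)) + dist u y * g (e (u, y))}"

end

theory Submission
  imports Defs
begin

lemma CK_unique:
  assumes sc: "stone_cech (top_of_set Mtilde) K e"
    and h1: "h1 \<in> CK K" and h2: "h2 \<in> CK K"
    and eq: "\<And>x y. x \<noteq> y \<Longrightarrow> h1 (e (x, y)) = h2 (e (x, y))"
  shows "h1 = h2"
proof
  fix p
  show "h1 p = h2 p"
  proof (cases "p \<in> topspace K")
    case False thus ?thesis using h1 h2 by (simp add: CK_def)
  next
    case True
    have c1: "continuous_map K euclideanreal h1" and c2: "continuous_map K euclideanreal h2"
      using h1 h2 by (auto simp: CK_def)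
    have cl: "closedin K {x \<in> topspace K. h1 x = h2 x}"
      by (rule closedin_continuous_maps_eq[OF _ c1 c2]) simp
    have emb: "embedding_map (top_of_set Mtilde) K e"
      and dens: "K closure_of (e ` topspace (top_of_set Mtilde)) = topspace K"
      using sc by (auto simp: stone_cech_def)
    have sub: "e ` Mtilde \<subseteq> topspace K"
      using emb unfolding embedding_map_def
      by (metis homeomorphic_imp_surjective_map inf.cobounded1 topspace_subtopology topspace_euclidean_subtopology)
    have "e ` Mtilde \<subseteq> {x \<in> topspace K. h1 x = h2 x}"
      using sub eq by (auto simp: Mtilde_def)
    hence "K closure_of (e ` Mtilde) \<subseteq> {x \<in> topspace K. h1 x = h2 x}"
      by (rule closure_of_minimal[OF _ cl])
    thus ?thesis using dens True by auto
  qed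
qed

lemma Phi_prop:
  fixes f :: "'a::metric_space \<Rightarrow> real"
  assumes sc: "stone_cech (top_of_set Mtilde) K e"
    and L: "L-lipschitz_on UNIV f"
  shows "Phi K e f \<in> CK K \<and> (\<forall>x y. x \<noteq> y \<longrightarrow> Phi K e f (e (x, y)) = (f x - f y) / dist x y)"
proof -
  define q where "q = (\<lambda>p::'a\<times>'a. (f (fst p) - f (snd p)) / dist (fst p) (snd p))"
  have cf: "continuous_on UNIV f" using L lipschitz_on_continuous_on by blast
  have cq: "continuous_on Mtilde q"
    unfolding q_def
    by (intro continuous_intros continuous_on_compose2[OF cf])
       (auto simp: Mtilde_def)
  have bq: "bounded (q ` Mtilde)"
  proof -
    have "\<bar>q p\<bar> \<le> L" for p
    proof (cases "fst p = snd p")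
      case True thus ?thesis using lipschitz_on_nonneg[OF L] by (simp add: q_def)
    next
      case False
      have "\<bar>f (fst p) - f (snd p)\<bar> \<le> L * dist (fst p) (snd p)"
        using lipschitz_onD[OF L, of "fst p" "snd p"] by (simp add: dist_real_def)
      thus ?thesis using False by (simp add: q_def abs_divide divide_le_eq)
    qed
    thus ?thesis unfolding bounded_iff by (metis image_iff real_norm_def surj_pair)
  qed
  obtain G where G: "continuous_map K euclideanreal G" "\<forall>p\<in>Mtilde. G (e p) = q p"
    using sc cq bq unfolding stone_cech_def by auto
  define h where "h = (\<lambda>p. if p \<in> topspace K then G p else 0)"
  have hC: "h \<in> CK K"
    unfolding CK_def h_def using G(1) by (auto intro: continuous_map_eq)
  have emb: "embedding_map (top_of_set Mtilde) K e"
    using sc by (auto simp: stone_cech_def)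
  have sub: "e ` Mtilde \<subseteq> topspace K"
    using emb unfolding embedding_map_def
      by (metis homeomorphic_imp_surjective_map inf.cobounded1 topspace_subtopology topspace_euclidean_subtopology)
  have hv: "\<forall>x y. x \<noteq> y \<longrightarrow> h (e (x, y)) = (f x - f y) / dist x y"
  proof (intro allI impI)
    fix x y :: 'a assume xy: "x \<noteq> y"
    have "e (x, y) \<in> topspace K" using sub xy by (auto simp: Mtilde_def)
    thus "h (e (x, y)) = (f x - f y) / dist x y" using G(2) xy by (auto simp: h_def q_def Mtilde_def)
  qed
  have "(THE h. h \<in> CK K \<and> (\<forall>x y. x \<noteq> y \<longrightarrow> h (e (x, y)) = (f x - f y) / dist x y)) = h"
    apply (rule the_equality)
    using hC hv apply blast
    using CK_unique[OF sc _ hC] hv by metis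
  thus ?thesis using hC hv by (simp add: Phi_def)
qed

lemma sc_sub:
  assumes sc: "stone_cech (top_of_set Mtilde) K e"
  shows "e ` Mtilde \<subseteq> topspace K"
proof -
  have emb: "embedding_map (top_of_set Mtilde) K e"
    using sc by (auto simp: stone_cech_def)
  show ?thesis using emb unfolding embedding_map_def
    by (metis homeomorphic_imp_surjective_map inf.cobounded1 topspace_subtopology topspace_euclidean_subtopology)
qed

theorem proposition2p8:
  fixes z :: "'a::complete_space" and K :: "'k topology" and e :: "'a \<times> 'a \<Rightarrow> 'k"
  assumes "\<exists>a b c :: 'a. a \<noteq> b \<and> b \<noteq> c \<and> a \<noteq> c"
    and "stone_cech (top_of_set Mtilde) K e"
  shows "GG K e \<inter> uminus ` (GG K e) = Phi K e ` Lip0 z"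
proof (rule set_eqI, rule iffI)
  note sc = assms(2)
  fix g assume "g \<in> GG K e \<inter> uminus ` (GG K e)"
  then obtain h where gG: "g \<in> GG K e" and hG: "h \<in> GG K e" and gh: "g = - h" by auto
  have gC: "g \<in> CK K" using gG by (simp add: GG_def)
  define H where "H = (\<lambda>x y. dist x y * g (e (x, y)))"
  have add: "H x y = H x u + H u y" if "x \<noteq> u" "u \<noteq> y" "x \<noteq> y" for x u y
  proof -
    have "H x y \<le> H x u + H u y" using gG that by (auto simp: GG_def H_def)
    moreover have "- H x y \<le> - H x u + - H u y"
      using hG that gh by (auto simp: GG_def H_def)
    ultimately show ?thesis by linarith
  qed
  have anti: "H x y + H y x = 0" if "x \<noteq> y" for x y
  proof -
    obtain a b c :: 'a where abc: "a \<noteq> b" "b \<noteq> c" "a \<noteq> c" using assms(1) by blast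
    have "\<exists>w. w \<noteq> x \<and> w \<noteq> y"
    proof (cases "a \<noteq> x \<and> a \<noteq> y")
      case True thus ?thesis by blast
    next
      case F1: False
      show ?thesis
      proof (cases "b \<noteq> x \<and> b \<noteq> y")
        case True thus ?thesis by blast
      next
        case False
        hence "c \<noteq> x \<and> c \<noteq> y" using F1 abc that by metis
        thus ?thesis by blast
      qed
    qed
    then obtain w where w: "w \<noteq> x" "w \<noteq> y" by blast
    have "H w x = H w y + H y x" using add[of w y x] w that by blast
    moreover have "H w y = H w x + H x y" using add[of w x y] w that by blast
    ultimately show ?thesis by linarith
  qed
  define f where "f = (\<lambda>x. if x = z then 0 else H x z)"
  have fd: "f x - f y = H x y" if "x \<noteq> y" for x y
  proof (cases "x = z")
    case True thus ?thesis using that anti[of y z] by (simp add: f_def)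
  next
    case False
    show ?thesis
    proof (cases "y = z")
      case True thus ?thesis using False by (simp add: f_def)
    next
      case False2: False
      thus ?thesis using False that add[of x z y] anti[of y z] by (simp add: f_def)
    qed
  qed
  have gv: "g (e (x, y)) = (f x - f y) / dist x y" if "x \<noteq> y" for x y
    using fd[OF that] that by (simp add: H_def)
  have "compactin euclideanreal (g ` topspace K)"
    using image_compactin[of K "topspace K" euclideanreal g] sc gC
    by (auto simp: stone_cech_def compact_space_def CK_def)
  hence "bounded (g ` topspace K)" by (simp add: compact_imp_bounded)
  then obtain B where B: "\<forall>p\<in>topspace K. \<bar>g p\<bar> \<le> B" unfolding bounded_iff by auto
  have sub: "e ` Mtilde \<subseteq> topspace K" by (rule sc_sub[OF sc])
  have lip: "(max B 0)-lipschitz_on UNIV f"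
    unfolding lipschitz_on_def
  proof (intro conjI ballI)
    fix x y :: 'a
    show "dist (f x) (f y) \<le> max B 0 * dist x y"
    proof (cases "x = y")
      case False
      have "e (x, y) \<in> topspace K" using sub False by (auto simp: Mtilde_def)
      hence "\<bar>g (e (x, y))\<bar> \<le> max B 0" using B by force
      hence "dist x y * \<bar>g (e (x, y))\<bar> \<le> dist x y * max B 0"
        by (simp add: mult_left_mono)
      thus ?thesis using fd[OF False] by (simp add: H_def dist_real_def abs_mult mult.commute)
    qed simp
  qed simp
  have fL: "f \<in> Lip0 z" using lip by (auto simp: Lip0_def f_def)
  have "Phi K e f = g"
    using CK_unique[OF sc _ gC] Phi_prop[OF sc lip] gv by metis
  thus "g \<in> Phi K e ` Lip0 z" using fL by blast
next
  note sc = assms(2)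
  fix g assume "g \<in> Phi K e ` Lip0 z"
  then obtain f L where g: "g = Phi K e f" and L: "L-lipschitz_on UNIV f"
    by (auto simp: Lip0_def)
  note P = Phi_prop[OF sc L]
  have gC: "g \<in> CK K" using P g by simp
  have gv: "dist x y * g (e (x, y)) = f x - f y" if "x \<noteq> y" for x y
    using P g that by simp
  have gG: "g \<in> GG K e"
    unfolding GG_def using gC gv by simp
  have mC: "- g \<in> CK K" using gC continuous_map_minus[of K g] by (simp add: CK_def fun_Compl_def)
  have mG: "- g \<in> GG K e"
    unfolding GG_def using mC gv by simp
  have "g = - (- g)" by (simp add: fun_Compl_def)
  thus "g \<in> GG K e \<inter> uminus ` (GG K e)" using gG mG by blast
qed

end
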